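(* Under the standing assumptions on $f$, let $\ell>0$, $\beta=\ell d$, let $x_1,\dots,x_d$ be i.i.d. with density $f^\beta/N(\beta)$ and, independently, $y_1,\dots,y_d$ i.i.d. $N(0,(\beta|H|)^{-1})$. Then $$T_1(d):=\sum_{i=1}^d\frac{\beta\,h''''(0)}{24}\left(y_i^4-x_i^4\right)\to0\quad\text{in probability as }d\to\infty.$$
   Context: Standing assumptions: $f:\mathbb{R}\to(0,\infty)$ is an unnormalised univariate density with $f\in C^5$, $f(0)=1$, $f'(0)=0$, and $0$ is the unique global maximiser of $f$. Let $h:=\log f$ and $H:=h''(0)$, assumed $H<0$; there is $L>0$ with $|h^{(5)}(x)|<L$ for all $x\in\mathbb{R}$. Polynomial tails: there exist $\gamma,M,K>0$ with $\sup_{|x|>M} f(x)|x|^{\gamma}<K$. Dutchman's cap condition: there exists $\delta_2\in(0,M)$ such that $f(x)\le\exp(-x^2|H|/4)$ for $|x|<\delta_2$ and $f(x)\le\exp(-\delta_2^2|H|/4)$ for $\delta_2\le|x|\le M$. Normalisation: $N(\beta):=\int_{\mathbb{R}}f(x)^\beta\,dx$. *)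

theory Defs
  imports "HOL-Probability.Probability"
begin

definition Nconst :: "(real \<Rightarrow> real) \<Rightarrow> real \<Rightarrow> real" where
  "Nconst f \<beta> = (\<integral>x. f x powr \<beta> \<partial>lborel)"

definition tilted_measure :: "(real \<Rightarrow> real) \<Rightarrow> real \<Rightarrow> real measure" where
  "tilted_measure f \<beta> = density lborel (\<lambda>x. ennreal (f x powr \<beta> / Nconst f \<beta>))"

text \<open>Joint law of (x_1..x_d, y_1..y_d): x_i iid with density f^beta/N(beta),
  independently y_i iid N(0, 1/(beta |H|)) (standard deviation 1/sqrt(beta |H|)).\<close>
definition joint_measure ::
  "(real \<Rightarrow> real) \<Rightarrow> real \<Rightarrow> real \<Rightarrow> nat \<Rightarrow> ((nat \<Rightarrow> real) \<times> (nat \<Rightarrow> real)) measure" where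
  "joint_measure f H \<beta> d =
     (PiM {..<d} (\<lambda>i. tilted_measure f \<beta>)) \<Otimes>\<^sub>M
     (PiM {..<d} (\<lambda>i. density lborel (normal_density 0 (1 / sqrt (\<beta> * \<bar>H\<bar>)))))"

end

theory Submission
  imports Defs "HOL-Real_Asymp.Real_Asymp"
begin



lemma tail_int:
  fixes M :: real assumes M: "M > 0"
  shows "integrable lborel (\<lambda>x. indicator {x. M \<le> \<bar>x\<bar>} x * \<bar>x\<bar> powr -2)"
proof -
  define g where "g = (\<lambda>x::real. indicator {M..} x * x powr -2)"
  have h1: "((\<lambda>x. x powr -2) has_integral (-(M powr (-2+1)) / (-2+1))) {M..}"
    by (rule has_integral_powr_to_inf) (use M in auto)
  have e1: "g = (\<lambda>x. if x \<in> {M..} then x powr -2 else 0)"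
    unfolding g_def by (auto simp: indicator_def fun_eq_iff)
  have e2: "-(M powr (-2+1)) / (-2+1) = M powr -1" by simp
  have h2: "(g has_integral (M powr -1)) UNIV"
    unfolding e1 has_integral_restrict_UNIV using h1 e2 by simp
  have gm: "g \<in> borel_measurable borel" unfolding g_def by measurable
  have gnn: "\<And>x. 0 \<le> g x" unfolding g_def by (auto simp: indicator_def)
  have "integral\<^sup>N lborel g = M powr -1"
    by (rule nn_integral_has_integral_lborel[OF gm gnn h2])
  then have gi: "integrable lborel g"
    by (intro integrableI_nonneg) (use gm gnn in auto)
  have gi2: "integrable lborel (\<lambda>x. g (0 + (-1) * x))"
    by (rule lborel_integrable_real_affine[OF gi]) simp
  have "integrable lborel (\<lambda>x. g x + g (0 + (-1) * x))"
    using gi gi2 by (rule Bochner_Integration.integrable_add)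
  moreover have "(\<lambda>x. g x + g (0 + (-1) * x)) = (\<lambda>x. indicator {x. M \<le> \<bar>x\<bar>} x * \<bar>x\<bar> powr -2)"
    using M by (auto simp: g_def indicator_def fun_eq_iff)
  ultimately show ?thesis by simp
qed

context
  fixes f :: "real \<Rightarrow> real" and H M K \<gamma> c q :: real
  assumes fpos: "\<And>x. f x > 0"
  and fmeas[measurable]: "f \<in> borel_measurable borel"
  and fle1: "\<And>x. f x \<le> 1"
  and Mpos: "M > 0" and Kpos: "K > 0" and gpos: "\<gamma> > 0" and cpos: "c > 0"
  and cap: "\<And>x. \<bar>x\<bar> \<le> M \<Longrightarrow> f x \<le> exp (- (c * x\<^sup>2))"
  and q0: "0 < q" and q1: "q < 1" and fq: "\<And>x. M < \<bar>x\<bar> \<Longrightarrow> f x \<le> q"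
  and tail: "\<And>x. M < \<bar>x\<bar> \<Longrightarrow> f x * \<bar>x\<bar> powr \<gamma> < K"
  and ptw: "\<And>u. ((\<lambda>\<beta>. f (u / sqrt \<beta>) powr \<beta>) \<longlongrightarrow> exp (H * u\<^sup>2 / 2)) at_top"
begin

lemma tail_bound:
  assumes x: "M < \<bar>x\<bar>" and b: "(real k + 2) / \<gamma> \<le> \<beta>"
  shows "\<bar>x\<bar> ^ k * f x powr \<beta> \<le> K powr ((real k + 2) / \<gamma>) * \<bar>x\<bar> powr -2"
proof -
  define b0 where "b0 = (real k + 2) / \<gamma>"
  have b0pos: "b0 > 0" using gpos by (simp add: b0_def)
  have xpos: "\<bar>x\<bar> > 0" using x Mpos by linarith
  have "f x powr \<beta> \<le> f x powr b0"
    using b fle1[of x] fpos[of x] by (intro powr_mono') (auto simp: b0_def)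
  also have "f x \<le> K * \<bar>x\<bar> powr (-\<gamma>)"
  proof -
    have "f x * \<bar>x\<bar> powr \<gamma> < K" by (rule tail[OF x])
    then have "f x < K / \<bar>x\<bar> powr \<gamma>" using xpos by (simp add: field_simps)
    then show ?thesis using xpos by (simp add: powr_minus divide_inverse)
  qed
  then have "f x powr b0 \<le> (K * \<bar>x\<bar> powr (-\<gamma>)) powr b0"
    using fpos[of x] b0pos by (intro powr_mono2) auto
  also have "\<dots> = K powr b0 * \<bar>x\<bar> powr (- (real k + 2))"
    using Kpos xpos gpos by (simp add: powr_mult powr_powr b0_def)
  finally have 1: "f x powr \<beta> \<le> K powr b0 * \<bar>x\<bar> powr (- (real k + 2))" .
  have "\<bar>x\<bar> ^ k * f x powr \<beta> \<le> \<bar>x\<bar> ^ k * (K powr b0 * \<bar>x\<bar> powr (- (real k + 2)))"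
    using 1 by (intro mult_left_mono) auto
  also have "\<dots> = K powr b0 * (\<bar>x\<bar> powr real k * \<bar>x\<bar> powr (- (real k + 2)))"
    using xpos by (simp add: powr_realpow)
  also have "\<bar>x\<bar> powr real k * \<bar>x\<bar> powr (- (real k + 2)) = \<bar>x\<bar> powr -2"
    using xpos by (simp add: powr_add[symmetric])
  finally show ?thesis by (simp add: b0_def)
qed

definition Wb :: "nat \<Rightarrow> real \<Rightarrow> real" where
  "Wb k x = indicator {-M..M} x * M ^ k
     + K powr ((real k + 2) / \<gamma>) * (indicator {x. M \<le> \<bar>x\<bar>} x * \<bar>x\<bar> powr -2)"

lemma Wb_int: "integrable lborel (Wb k)"
proof -
  have "integrable lborel (\<lambda>x. indicator {-M..M} x * M ^ k :: real)"
    using Mpos by (intro integrable_mult_left integrable_real_indicator) (auto simp: emeasure_lborel_Icc)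
  moreover have "integrable lborel (\<lambda>x. K powr ((real k + 2) / \<gamma>) * (indicator {x. M \<le> \<bar>x\<bar>} x * \<bar>x\<bar> powr -2))"
    by (intro integrable_mult_right tail_int Mpos)
  ultimately show ?thesis unfolding Wb_def[abs_def] by (rule Bochner_Integration.integrable_add)
qed

lemma Wb_bound:
  assumes b: "(real k + 2) / \<gamma> \<le> \<beta>"
  shows "\<bar>x ^ k * f x powr \<beta>\<bar> \<le> Wb k x"
proof (cases "\<bar>x\<bar> \<le> M")
  case True
  have "\<bar>x ^ k * f x powr \<beta>\<bar> = \<bar>x\<bar> ^ k * f x powr \<beta>"
    by (simp add: abs_mult power_abs)
  also have "\<dots> \<le> M ^ k * 1"
  proof (rule mult_mono)
    show "\<bar>x\<bar> ^ k \<le> M ^ k" using True by (intro power_mono) auto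
    have "0 \<le> \<beta>" using b gpos by (smt (verit) divide_nonneg_pos of_nat_0_le_iff)
    then show "f x powr \<beta> \<le> 1" using fle1[of x] fpos[of x] using powr_mono2[of \<beta> "f x" 1] by simp
  qed (use Mpos in auto)
  also have "\<dots> \<le> Wb k x"
    using True Kpos Mpos by (auto simp: Wb_def indicator_def)
  finally show ?thesis .
next
  case False
  have "\<bar>x ^ k * f x powr \<beta>\<bar> = \<bar>x\<bar> ^ k * f x powr \<beta>"
    by (simp add: abs_mult power_abs)
  also have "\<dots> \<le> K powr ((real k + 2) / \<gamma>) * \<bar>x\<bar> powr -2"
    using False b by (intro tail_bound) auto
  also have "\<dots> = Wb k x"
    using False by (auto simp: Wb_def indicator_def)
  finally show ?thesis .
qed

lemma J_int:
  assumes b: "(real k + 2) / \<gamma> \<le> \<beta>"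
  shows "integrable lborel (\<lambda>x. x ^ k * f x powr \<beta>)"
proof (rule Bochner_Integration.integrable_bound[OF Wb_int])
  show "(\<lambda>x. x ^ k * f x powr \<beta>) \<in> borel_measurable lborel" by measurable
  show "AE x in lborel. norm (x ^ k * f x powr \<beta>) \<le> norm (Wb k x)"
    using Wb_bound[OF b] by (auto intro!: always_eventually order.trans[OF _ abs_ge_self])
qed


lemma w_int: "integrable lborel (\<lambda>u. \<bar>u\<bar> ^ k * exp (- (c * u\<^sup>2)))"
proof -
  define \<sigma> where "\<sigma> = 1 / sqrt (2 * c)"
  have sp: "\<sigma> > 0" using cpos by (simp add: \<sigma>_def)
  have s2: "\<sigma>\<^sup>2 = 1 / (2 * c)" using cpos by (simp add: \<sigma>_def power_divide)
  have i: "integrable lborel (\<lambda>u. sqrt (2 * pi * \<sigma>\<^sup>2) * (normal_density 0 \<sigma> u * \<bar>u - 0\<bar> ^ k))"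
    by (intro integrable_mult_right integrable_normal_moment_abs sp)
  have eq: "(\<lambda>u. sqrt (2 * pi * \<sigma>\<^sup>2) * (normal_density 0 \<sigma> u * \<bar>u - 0\<bar> ^ k)) = (\<lambda>u. \<bar>u\<bar> ^ k * exp (- (c * u\<^sup>2)))"
  proof
    fix u
    have pos: "sqrt (2 * pi * \<sigma>\<^sup>2) > 0" using sp by simp
    have e: "(u - 0)\<^sup>2 / (2 * \<sigma>\<^sup>2) = c * u\<^sup>2" using cpos by (simp add: s2)
    show "sqrt (2 * pi * \<sigma>\<^sup>2) * (normal_density 0 \<sigma> u * \<bar>u - 0\<bar> ^ k) = \<bar>u\<bar> ^ k * exp (- (c * u\<^sup>2))"
      unfolding normal_density_def using pos e sp by (simp add: field_simps)
  qed
  show ?thesis using i unfolding eq .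
qed

lemma inner_lim:
  "((\<lambda>\<beta>. sqrt \<beta> ^ (k+1) * (\<integral>x. indicator {-M..M} x * (x ^ k * f x powr \<beta>) \<partial>lborel))
     \<longlongrightarrow> (\<integral>u. u ^ k * exp (H * u\<^sup>2 / 2) \<partial>lborel)) at_top"
proof -
  define s where "s = (\<lambda>\<beta> u. indicator {-M..M} (u / sqrt \<beta>) * (u ^ k * f (u / sqrt \<beta>) powr \<beta>) :: real)"
  define w where "w = (\<lambda>u. \<bar>u\<bar> ^ k * exp (- (c * u\<^sup>2)))"
  have eq: "sqrt \<beta> ^ (k+1) * (\<integral>x. indicator {-M..M} x * (x ^ k * f x powr \<beta>) \<partial>lborel) = (\<integral>u. s \<beta> u \<partial>lborel)"
    if "\<beta> > 0" for \<beta>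
  proof -
    have sb: "sqrt \<beta> > 0" using that by simp
    let ?F = "\<lambda>x. indicator {-M..M} x * (x ^ k * f x powr \<beta>) :: real"
    have "(\<integral>x. ?F x \<partial>lborel) = \<bar>1 / sqrt \<beta>\<bar> *\<^sub>R (\<integral>u. ?F (0 + 1 / sqrt \<beta> * u) \<partial>lborel)"
      by (rule lborel_integral_real_affine) (use sb in simp)
    then have "sqrt \<beta> ^ (k+1) * (\<integral>x. ?F x \<partial>lborel) = sqrt \<beta> ^ (k+1) * (1 / sqrt \<beta>) * (\<integral>u. ?F (0 + 1 / sqrt \<beta> * u) \<partial>lborel)"
      using sb by simp
    also have "\<dots> = (\<integral>u. sqrt \<beta> ^ (k+1) * (1 / sqrt \<beta>) * ?F (0 + 1 / sqrt \<beta> * u) \<partial>lborel)"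
      by (rule integral_mult_right_zero[symmetric])
    also have "\<dots> = (\<integral>u. s \<beta> u \<partial>lborel)"
    proof (rule Bochner_Integration.integral_cong[OF refl])
      fix u
      have a: "sqrt \<beta> ^ (k+1) * (1 / sqrt \<beta>) = sqrt \<beta> ^ k" using sb by simp
      have b: "sqrt \<beta> ^ k * (u / sqrt \<beta>) ^ k = u ^ k"
        using sb by (simp add: power_mult_distrib[symmetric])
      show "sqrt \<beta> ^ (k+1) * (1 / sqrt \<beta>) * ?F (0 + 1 / sqrt \<beta> * u) = s \<beta> u"
        unfolding s_def a using b by (simp add: algebra_simps)
    qed
    finally show ?thesis .
  qed
  have lim: "((\<lambda>\<beta>. \<integral>u. s \<beta> u \<partial>lborel) \<longlongrightarrow> (\<integral>u. u ^ k * exp (H * u\<^sup>2 / 2) \<partial>lborel)) at_top"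
  proof (rule integral_dominated_convergence_at_top[where w=w])
    show "(\<lambda>u. u ^ k * exp (H * u\<^sup>2 / 2)) \<in> borel_measurable lborel" by measurable
    show "s \<beta> \<in> borel_measurable lborel" for \<beta> unfolding s_def by measurable
    show "integrable lborel w" unfolding w_def by (rule w_int)
    show "AE u in lborel. ((\<lambda>\<beta>. s \<beta> u) \<longlongrightarrow> u ^ k * exp (H * u\<^sup>2 / 2)) at_top"
    proof (rule always_eventually, rule allI)
      fix u :: real
      have ev: "\<forall>\<^sub>F \<beta> in at_top. s \<beta> u = u ^ k * f (u / sqrt \<beta>) powr \<beta>"
        using eventually_ge_at_top[of "u\<^sup>2 / M\<^sup>2 + 1"]
      proof eventually_elim
        case (elim \<beta>)
        have bpos: "\<beta> > 0" using elim by (smt (verit) divide_nonneg_nonneg zero_le_power2)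
        have "u\<^sup>2 / M\<^sup>2 \<le> \<beta>" using elim by simp
        then have "u\<^sup>2 \<le> \<beta> * M\<^sup>2" using Mpos by (simp add: divide_le_eq)
        then have "u\<^sup>2 \<le> (M * sqrt \<beta>)\<^sup>2" using bpos by (simp add: power_mult_distrib mult.commute)
        then have "\<bar>u\<bar> \<le> \<bar>M * sqrt \<beta>\<bar>" by (simp add: abs_le_square_iff)
        then have "\<bar>u\<bar> \<le> M * sqrt \<beta>" using Mpos bpos by simp
        then have "\<bar>u / sqrt \<beta>\<bar> \<le> M" using bpos by (simp add: divide_le_eq)
        then have "u / sqrt \<beta> \<in> {-M..M}" by (metis abs_le_iff atLeastAtMost_iff minus_le_iff)
        then show ?case unfolding s_def by simp
      qed
      show "((\<lambda>\<beta>. s \<beta> u) \<longlongrightarrow> u ^ k * exp (H * u\<^sup>2 / 2)) at_top"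
        by (subst tendsto_cong[OF ev]) (intro tendsto_mult_left ptw)
    qed
    show "\<forall>\<^sub>F \<beta> in at_top. AE u in lborel. norm (s \<beta> u) \<le> w u"
      using eventually_gt_at_top[of 0]
    proof eventually_elim
      case (elim \<beta>)
      show ?case
      proof (rule always_eventually, rule allI)
        fix u
        show "norm (s \<beta> u) \<le> w u"
        proof (cases "u / sqrt \<beta> \<in> {-M..M}")
          case True
          then have ab: "\<bar>u / sqrt \<beta>\<bar> \<le> M" by auto
          have "f (u / sqrt \<beta>) powr \<beta> \<le> exp (- (c * (u / sqrt \<beta>)\<^sup>2)) powr \<beta>"
            using cap[OF ab] fpos elim by (intro powr_mono2) (auto intro: less_imp_le)
          also have "\<dots> = exp (- (c * u\<^sup>2))"
            using elim by (simp add: powr_def power_divide)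
          finally have 1: "f (u / sqrt \<beta>) powr \<beta> \<le> exp (- (c * u\<^sup>2))" .
          have "norm (s \<beta> u) = \<bar>u\<bar> ^ k * f (u / sqrt \<beta>) powr \<beta>"
            using True unfolding s_def by (simp add: abs_mult power_abs)
          also have "\<dots> \<le> w u" unfolding w_def using 1 by (intro mult_left_mono) auto
          finally show ?thesis .
        next
          case False
          then show ?thesis unfolding s_def w_def by simp
        qed
      qed
    qed
  qed
  have ev: "\<forall>\<^sub>F \<beta> in at_top. sqrt \<beta> ^ (k+1) * (\<integral>x. indicator {-M..M} x * (x ^ k * f x powr \<beta>) \<partial>lborel) = (\<integral>u. s \<beta> u \<partial>lborel)"
    using eventually_gt_at_top[of "0::real"] by (rule eventually_mono) (rule eq)
  show ?thesis using lim tendsto_cong[OF ev] by blast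
qed


lemma powr_q_lim: "((\<lambda>\<beta>::real. \<beta> powr a * q powr \<beta>) \<longlongrightarrow> 0) at_top"
  using q0 q1 by real_asymp

lemma laplace:
  "((\<lambda>\<beta>. sqrt \<beta> ^ (k+1) * (\<integral>x. x ^ k * f x powr \<beta> \<partial>lborel))
     \<longlongrightarrow> (\<integral>u. u ^ k * exp (H * u\<^sup>2 / 2) \<partial>lborel)) at_top"
proof -
  define b0 where "b0 = (real k + 2) / \<gamma>"
  have b0pos: "b0 > 0" using gpos by (simp add: b0_def)
  define Out where "Out = {x::real. M < \<bar>x\<bar>}"
  have Osets: "Out \<in> sets lborel"
  proof -
    have "Out = {..<-M} \<union> {M<..}" unfolding Out_def by auto
    then show ?thesis by simp
  qed
  define Jin where "Jin = (\<lambda>\<beta>. \<integral>x. indicator {-M..M} x * (x ^ k * f x powr \<beta>) \<partial>lborel)"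
  define Jout where "Jout = (\<lambda>\<beta>. \<integral>x. indicator Out x * (x ^ k * f x powr \<beta>) \<partial>lborel)"
  define Z where "Z = (\<integral>x. indicator Out x * (\<bar>x\<bar> ^ k * f x powr b0) \<partial>lborel)"
  have ii: "integrable lborel (\<lambda>x. indicator A x * (x ^ k * f x powr \<beta>))"
    if "A \<in> sets lborel" "b0 \<le> \<beta>" for A \<beta>
    using integrable_mult_indicator[OF that(1) J_int[of k \<beta>]] that(2) by (simp add: b0_def)
  have split: "(\<integral>x. x ^ k * f x powr \<beta> \<partial>lborel) = Jin \<beta> + Jout \<beta>" if b: "b0 \<le> \<beta>" for \<beta>
  proof -
    have "Jin \<beta> + Jout \<beta> = (\<integral>x. indicator {-M..M} x * (x ^ k * f x powr \<beta>) + indicator Out x * (x ^ k * f x powr \<beta>) \<partial>lborel)"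
      unfolding Jin_def Jout_def
      by (rule Bochner_Integration.integral_add[symmetric]) (auto intro!: ii Osets b)
    also have "\<dots> = (\<integral>x. x ^ k * f x powr \<beta> \<partial>lborel)"
      by (rule Bochner_Integration.integral_cong) (auto simp: Out_def indicator_def)
    finally show ?thesis by simp
  qed
  have Zint: "integrable lborel (\<lambda>x. indicator Out x * (\<bar>x\<bar> ^ k * f x powr b0))"
  proof -
    have "integrable lborel (\<lambda>x. \<bar>indicator Out x * (x ^ k * f x powr b0)\<bar>)"
      by (intro integrable_abs ii Osets) simp
    moreover have "(\<lambda>x. \<bar>indicator Out x * (x ^ k * f x powr b0)\<bar>) = (\<lambda>x. indicator Out x * (\<bar>x\<bar> ^ k * f x powr b0))"
      by (auto simp: fun_eq_iff indicator_def abs_mult power_abs)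
    ultimately show ?thesis by simp
  qed
  have obound: "\<bar>Jout \<beta>\<bar> \<le> q powr (\<beta> - b0) * Z" if b: "b0 \<le> \<beta>" for \<beta>
  proof -
    have "\<bar>Jout \<beta>\<bar> \<le> (\<integral>x. norm (indicator Out x * (x ^ k * f x powr \<beta>)) \<partial>lborel)"
      unfolding Jout_def using integral_norm_bound[of lborel "\<lambda>x. indicator Out x * (x ^ k * f x powr \<beta>)"] by simp
    also have "\<dots> \<le> (\<integral>x. q powr (\<beta> - b0) * (indicator Out x * (\<bar>x\<bar> ^ k * f x powr b0)) \<partial>lborel)"
    proof (rule integral_mono)
      show "integrable lborel (\<lambda>x. norm (indicator Out x * (x ^ k * f x powr \<beta>)))"
        by (intro integrable_norm ii Osets b)
      show "integrable lborel (\<lambda>x. q powr (\<beta> - b0) * (indicator Out x * (\<bar>x\<bar> ^ k * f x powr b0)))"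
        by (intro integrable_mult_right Zint)
      fix x :: real
      show "norm (indicator Out x * (x ^ k * f x powr \<beta>)) \<le> q powr (\<beta> - b0) * (indicator Out x * (\<bar>x\<bar> ^ k * f x powr b0))"
      proof (cases "x \<in> Out")
        case True
        then have xo: "M < \<bar>x\<bar>" by (simp add: Out_def)
        have "f x powr \<beta> = f x powr b0 * f x powr (\<beta> - b0)"
          using fpos[of x] by (simp add: powr_add[symmetric])
        also have "\<dots> \<le> f x powr b0 * q powr (\<beta> - b0)"
          using fq[OF xo] fpos[of x] b by (intro mult_left_mono powr_mono2) auto
        finally have 1: "f x powr \<beta> \<le> f x powr b0 * q powr (\<beta> - b0)" .
        have "norm (indicator Out x * (x ^ k * f x powr \<beta>)) = \<bar>x\<bar> ^ k * f x powr \<beta>"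
          using True by (simp add: abs_mult power_abs)
        also have "\<dots> \<le> \<bar>x\<bar> ^ k * (f x powr b0 * q powr (\<beta> - b0))"
          using 1 by (intro mult_left_mono) auto
        finally show ?thesis using True by (simp add: algebra_simps)
      qed simp
    qed
    also have "\<dots> = q powr (\<beta> - b0) * Z"
      unfolding Z_def by (rule integral_mult_right_zero)
    finally show ?thesis .
  qed
  have lim_out: "((\<lambda>\<beta>. sqrt \<beta> ^ (k+1) * Jout \<beta>) \<longlongrightarrow> 0) at_top"
  proof (rule Lim_null_comparison)
    show "\<forall>\<^sub>F \<beta> in at_top. norm (sqrt \<beta> ^ (k+1) * Jout \<beta>) \<le> (\<beta> powr ((real k + 1) / 2) * q powr \<beta>) * (Z / q powr b0)"
      using eventually_ge_at_top[of b0]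
    proof eventually_elim
      case (elim \<beta>)
      have bp: "\<beta> > 0" using elim b0pos by linarith
      have "sqrt \<beta> ^ (k+1) = (\<beta> powr (1/2)) powr real (k+1)"
        using bp powr_realpow[of "sqrt \<beta>" "k+1"] by (simp add: powr_half_sqrt del: of_nat_Suc)
      also have "\<dots> = \<beta> powr ((real k + 1) / 2)"
        by (simp add: powr_powr add.commute)
      finally have "sqrt \<beta> ^ (k+1) = \<beta> powr ((real k + 1) / 2)" .
      moreover have "q powr (\<beta> - b0) = q powr \<beta> / q powr b0"
        using q0 by (simp add: powr_diff)
      moreover have "norm (sqrt \<beta> ^ (k+1) * Jout \<beta>) \<le> sqrt \<beta> ^ (k+1) * (q powr (\<beta> - b0) * Z)"
        using obound[OF elim] bp by (simp add: abs_mult mult_left_mono)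
      ultimately show ?case by simp
    qed
    show "((\<lambda>\<beta>. (\<beta> powr ((real k + 1) / 2) * q powr \<beta>) * (Z / q powr b0)) \<longlongrightarrow> 0) at_top"
      by (rule tendsto_mult_left_zero[OF powr_q_lim])
  qed
  have ev: "\<forall>\<^sub>F \<beta> in at_top. sqrt \<beta> ^ (k+1) * Jin \<beta> + sqrt \<beta> ^ (k+1) * Jout \<beta> = sqrt \<beta> ^ (k+1) * (\<integral>x. x ^ k * f x powr \<beta> \<partial>lborel)"
    using eventually_ge_at_top[of b0] by (rule eventually_mono) (simp add: split distrib_left)
  have "((\<lambda>\<beta>. sqrt \<beta> ^ (k+1) * Jin \<beta> + sqrt \<beta> ^ (k+1) * Jout \<beta>) \<longlongrightarrow> (\<integral>u. u ^ k * exp (H * u\<^sup>2 / 2) \<partial>lborel) + 0) at_top"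
    by (intro tendsto_add lim_out) (unfold Jin_def, rule inner_lim)
  then show ?thesis using tendsto_cong[OF ev] by simp
qed


lemma tilted_props:
  assumes b: "(real k + 2) / \<gamma> \<le> \<beta>" and N: "(\<integral>x. f x powr \<beta> \<partial>lborel) > 0"
  shows "prob_space (tilted_measure f \<beta>)" and "sets (tilted_measure f \<beta>) = sets borel"
    and "integrable (tilted_measure f \<beta>) (\<lambda>x. x ^ k)"
    and "(\<integral>x. x ^ k \<partial>tilted_measure f \<beta>) = (\<integral>x. x ^ k * f x powr \<beta> \<partial>lborel) / (\<integral>x. f x powr \<beta> \<partial>lborel)"
proof -
  define N where "N = (\<integral>x. f x powr \<beta> \<partial>lborel)"
  have Nc: "Nconst f \<beta> = N" by (simp add: Nconst_def N_def)
  have "2 / \<gamma> \<le> (real k + 2) / \<gamma>" by (intro divide_right_mono) (use gpos in auto)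
  then have b0: "(real 0 + 2) / \<gamma> \<le> \<beta>" using b by simp
  have i0: "integrable lborel (\<lambda>x. f x powr \<beta>)" using J_int[OF b0] by simp
  define g where "g = (\<lambda>x. f x powr \<beta> / N)"
  have gm[measurable]: "g \<in> borel_measurable lborel" unfolding g_def by measurable
  have gnn: "AE x in lborel. 0 \<le> g x" using N by (simp add: g_def N_def)
  have T: "tilted_measure f \<beta> = density lborel g" by (simp add: tilted_measure_def Nc g_def)
  have "emeasure (density lborel g) (space (density lborel g)) = (\<integral>\<^sup>+x. ennreal (g x) \<partial>lborel)"
    by (simp add: emeasure_density)
  also have "\<dots> = ennreal (\<integral>x. g x \<partial>lborel)"
    by (rule nn_integral_eq_integral) (use i0 gnn in \<open>auto simp: g_def\<close>)
  also have "(\<integral>x. g x \<partial>lborel) = 1" using N by (simp add: g_def N_def)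
  finally show "prob_space (tilted_measure f \<beta>)" unfolding T by (intro prob_spaceI) simp
  show "sets (tilted_measure f \<beta>) = sets borel" unfolding T by simp
  have e: "(\<lambda>x. g x * x ^ k) = (\<lambda>x. (x ^ k * f x powr \<beta>) / N)" by (auto simp: g_def fun_eq_iff)
  have ie: "integrable lborel (\<lambda>x. g x * x ^ k)"
    unfolding e by (intro integrable_divide_zero J_int[OF b])
  show "integrable (tilted_measure f \<beta>) (\<lambda>x. x ^ k)"
    unfolding T by (subst integrable_density) (use gnn ie in auto)
  show "(\<integral>x. x ^ k \<partial>tilted_measure f \<beta>) = (\<integral>x. x ^ k * f x powr \<beta> \<partial>lborel) / (\<integral>x. f x powr \<beta> \<partial>lborel)"
    unfolding T by (subst integral_density) (use gnn in \<open>auto simp: e N_def\<close>)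
qed

end


lemma pim_var:
  fixes M :: "'a measure" and g :: "'a \<Rightarrow> real" and d :: nat
  assumes P: "prob_space M" and ig: "integrable M g" and ig2: "integrable M (\<lambda>x. (g x)\<^sup>2)"
  shows "integrable (PiM {..<d} (\<lambda>_. M)) (\<lambda>\<omega>. (\<Sum>i<d. (g (\<omega> i) - integral\<^sup>L M g))\<^sup>2)"
    and "(\<integral>\<omega>. (\<Sum>i<d. (g (\<omega> i) - integral\<^sup>L M g))\<^sup>2 \<partial>PiM {..<d} (\<lambda>_. M))
           = real d * (\<integral>x. (g x - integral\<^sup>L M g)\<^sup>2 \<partial>M)"
proof -
  interpret prob_space M by (rule P)
  interpret PS: product_prob_space "\<lambda>_. M" by (rule product_prob_spaceI) (rule P)
  define m where "m = integral\<^sup>L M g"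
  let ?P = "PiM {..<d} (\<lambda>_. M)"
  define G where "G = (\<lambda>x. g x - m)"
  have iG: "integrable M G" using ig unfolding G_def by auto
  have eG2: "(\<lambda>x. G x * G x) = (\<lambda>x. (g x)\<^sup>2 - 2 * m * g x + m\<^sup>2)"
    by (auto simp: G_def fun_eq_iff power2_eq_square algebra_simps)
  have iG2: "integrable M (\<lambda>x. G x * G x)" unfolding eG2 using ig ig2 by auto
  have G0: "integral\<^sup>L M G = 0"
    unfolding G_def using ig by (simp add: m_def prob_space)
  define F where "F = (\<lambda>i j k::nat. \<lambda>t. (if k = i then G t else 1) * (if k = j then G t else (1::real)))"
  have iF: "integrable M (F i j k)" for i j k
    unfolding F_def using iG iG2 by (cases "k = i"; cases "k = j") auto
  have prodF: "(\<Prod>k\<in>{..<d}. F i j k (\<omega> k)) = G (\<omega> i) * G (\<omega> j)" if "i < d" "j < d" for i j \<omega>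
    unfolding F_def prod.distrib using that by simp
  have intij: "integrable ?P (\<lambda>\<omega>. G (\<omega> i) * G (\<omega> j))" if "i < d" "j < d" for i j
    using PS.product_integrable_prod[of "{..<d}" "F i j"] iF prodF[OF that] by simp
  have valij: "(\<integral>\<omega>. G (\<omega> i) * G (\<omega> j) \<partial>?P) = (if i = j then \<integral>x. G x * G x \<partial>M else 0)"
    if ij: "i < d" "j < d" for i j
  proof -
    have "(\<integral>\<omega>. G (\<omega> i) * G (\<omega> j) \<partial>?P) = (\<Prod>k\<in>{..<d}. integral\<^sup>L M (F i j k))"
      using PS.product_integral_prod[of "{..<d}" "F i j"] iF prodF[OF ij] by simp
    also have "\<dots> = (if i = j then \<integral>x. G x * G x \<partial>M else 0)"
    proof (cases "i = j")
      case True
      have "(\<Prod>k\<in>{..<d}. integral\<^sup>L M (F i j k)) = (\<Prod>k\<in>{..<d}. if k = i then \<integral>x. G x * G x \<partial>M else 1)"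
        by (rule prod.cong) (auto simp: F_def True prob_space)
      then show ?thesis using True ij by simp
    next
      case False
      have "integral\<^sup>L M (F i j i) = 0" using False G0 by (simp add: F_def)
      then have "(\<Prod>k\<in>{..<d}. integral\<^sup>L M (F i j k)) = 0"
        using ij by (intro prod_zero) auto
      then show ?thesis using False by simp
    qed
    finally show ?thesis .
  qed
  have sq: "(\<Sum>i<d. (g (\<omega> i) - m))\<^sup>2 = (\<Sum>i<d. \<Sum>j<d. G (\<omega> i) * G (\<omega> j))" for \<omega>
    unfolding power2_eq_square G_def by (rule sum_product)
  show "integrable ?P (\<lambda>\<omega>. (\<Sum>i<d. (g (\<omega> i) - integral\<^sup>L M g))\<^sup>2)"
    unfolding m_def[symmetric] sq by (intro Bochner_Integration.integrable_sum intij) auto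
  have "(\<integral>\<omega>. (\<Sum>i<d. (g (\<omega> i) - m))\<^sup>2 \<partial>?P) = (\<Sum>i<d. \<Sum>j<d. \<integral>\<omega>. G (\<omega> i) * G (\<omega> j) \<partial>?P)"
    unfolding sq by (subst Bochner_Integration.integral_sum) (auto intro!: Bochner_Integration.integrable_sum intij sum.cong Bochner_Integration.integral_sum)
  also have "\<dots> = (\<Sum>i<d. \<Sum>j<d. if i = j then \<integral>x. G x * G x \<partial>M else 0)"
    by (intro sum.cong refl valij) auto
  also have "\<dots> = real d * (\<integral>x. (g x - m)\<^sup>2 \<partial>M)"
    by (simp add: G_def power2_eq_square)
  finally show "(\<integral>\<omega>. (\<Sum>i<d. (g (\<omega> i) - integral\<^sup>L M g))\<^sup>2 \<partial>?P) = real d * (\<integral>x. (g x - integral\<^sup>L M g)\<^sup>2 \<partial>M)"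
    unfolding m_def .
qed


lemma distr_pair_snd':
  assumes PM: "prob_space M" and SN: "sigma_finite_measure N"
  shows "distr (M \<Otimes>\<^sub>M N) N snd = N"
proof (intro measure_eqI)
  interpret N: sigma_finite_measure N by (rule SN)
  interpret M: prob_space M by (rule PM)
  fix A assume A: "A \<in> sets (distr (M \<Otimes>\<^sub>M N) N snd)"
  then have A': "A \<in> sets N" by simp
  have "emeasure (distr (M \<Otimes>\<^sub>M N) N snd) A = emeasure (M \<Otimes>\<^sub>M N) (space M \<times> A)"
    using A' by (auto simp add: emeasure_distr space_pair_measure dest: sets.sets_into_space
        intro!: arg_cong2[where f=emeasure])
  also have "\<dots> = emeasure M (space M) * emeasure N A"
    by (rule N.emeasure_pair_measure_Times) (use A' in auto)
  finally show "emeasure (distr (M \<Otimes>\<^sub>M N) N snd) A = emeasure N A"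
    by (simp add: M.emeasure_space_1)
qed simp

lemma var_le:
  fixes M :: "'a measure" and g :: "'a \<Rightarrow> real"
  assumes P: "prob_space M" and ig: "integrable M g" and ig2: "integrable M (\<lambda>x. (g x)\<^sup>2)"
  shows "(\<integral>x. (g x - integral\<^sup>L M g)\<^sup>2 \<partial>M) \<le> (\<integral>x. (g x)\<^sup>2 \<partial>M)"
proof -
  interpret prob_space M by (rule P)
  define m where "m = integral\<^sup>L M g"
  have e: "(\<lambda>x. (g x - m)\<^sup>2) = (\<lambda>x. (g x)\<^sup>2 - 2 * m * g x + m\<^sup>2)"
    by (auto simp: fun_eq_iff power2_eq_square algebra_simps)
  have "(\<integral>x. (g x - m)\<^sup>2 \<partial>M) = (\<integral>x. (g x)\<^sup>2 \<partial>M) - 2 * m * m + m\<^sup>2"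
    unfolding e using ig ig2 by (simp add: m_def prob_space)
  also have "\<dots> \<le> (\<integral>x. (g x)\<^sup>2 \<partial>M)" by (simp add: power2_eq_square)
  finally show ?thesis by (simp add: m_def)
qed

lemma sq3: "((p::real) - q + r)\<^sup>2 \<le> 3 * (p\<^sup>2 + q\<^sup>2 + r\<^sup>2)"
proof -
  have "3 * (p\<^sup>2 + q\<^sup>2 + r\<^sup>2) - (p - q + r)\<^sup>2 = (p + q)\<^sup>2 + (p - r)\<^sup>2 + (q + r)\<^sup>2"
    by (simp add: power2_eq_square algebra_simps)
  moreover have "0 \<le> (p + q)\<^sup>2 + (p - r)\<^sup>2 + (q + r)\<^sup>2" by simp
  ultimately show ?thesis by linarith
qed

lemma markov_joint:
  fixes T G :: "real measure" and a \<epsilon> :: real and d :: nat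
  assumes PT: "prob_space T" and PG: "prob_space G"
    and sT: "sets T = sets borel" and sG: "sets G = sets borel"
    and iT4: "integrable T (\<lambda>x. x ^ 4)" and iT8: "integrable T (\<lambda>x. x ^ 8)"
    and iG4: "integrable G (\<lambda>x. x ^ 4)" and iG8: "integrable G (\<lambda>x. x ^ 8)"
    and eps: "\<epsilon> > 0"
  shows "measure (PiM {..<d} (\<lambda>i. T) \<Otimes>\<^sub>M PiM {..<d} (\<lambda>i. G))
           {\<omega> \<in> space (PiM {..<d} (\<lambda>i. T) \<Otimes>\<^sub>M PiM {..<d} (\<lambda>i. G)).
              \<bar>\<Sum>i<d. a * ((snd \<omega> i) ^ 4 - (fst \<omega> i) ^ 4)\<bar> > \<epsilon>}
         \<le> 3 * a\<^sup>2 * (real d * (\<integral>x. x ^ 8 \<partial>G) + real d * (\<integral>x. x ^ 8 \<partial>T)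
               + (real d * ((\<integral>x. x ^ 4 \<partial>G) - (\<integral>x. x ^ 4 \<partial>T)))\<^sup>2) / \<epsilon>\<^sup>2"
proof -
  define X where "X = PiM {..<d} (\<lambda>i. T)"
  define Y where "Y = PiM {..<d} (\<lambda>i. G)"
  define J where "J = X \<Otimes>\<^sub>M Y"
  have PX: "prob_space X" unfolding X_def by (intro prob_space_PiM PT)
  have PY: "prob_space Y" unfolding Y_def by (intro prob_space_PiM PG)
  have PJ: "prob_space J" unfolding J_def by (intro prob_space_pair PX PY)
  interpret J: prob_space J by (rule PJ)
  have SX: "sigma_finite_measure X" using PX by (simp add: prob_space_imp_sigma_finite)
  have SY: "sigma_finite_measure Y" using PY by (simp add: prob_space_imp_sigma_finite)
  define mT where "mT = (\<integral>x. x ^ 4 \<partial>T)"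
  define mG where "mG = (\<integral>x. x ^ 4 \<partial>G)"
  define A where "A = (\<lambda>\<omega>::nat\<Rightarrow>real. \<Sum>i<d. (\<omega> i ^ 4 - mT))"
  define B where "B = (\<lambda>\<omega>::nat\<Rightarrow>real. \<Sum>i<d. (\<omega> i ^ 4 - mG))"
  define D where "D = real d * (mG - mT)"
  define u where "u = (\<lambda>\<omega>. 3 * a\<^sup>2 * ((B (snd \<omega>))\<^sup>2 + (A (fst \<omega>))\<^sup>2 + D\<^sup>2))"
  have p4T: "(\<lambda>x. (x ^ 4)\<^sup>2) = (\<lambda>x::real. x ^ 8)" by (auto simp: fun_eq_iff power_mult[symmetric])
  have iA: "integrable X (\<lambda>\<omega>. (A \<omega>)\<^sup>2)" and vA: "(\<integral>\<omega>. (A \<omega>)\<^sup>2 \<partial>X) = real d * (\<integral>x. (x ^ 4 - mT)\<^sup>2 \<partial>T)"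
    using pim_var[OF PT iT4, of d] iT8 unfolding A_def X_def mT_def p4T by auto
  have iB: "integrable Y (\<lambda>\<omega>. (B \<omega>)\<^sup>2)" and vB: "(\<integral>\<omega>. (B \<omega>)\<^sup>2 \<partial>Y) = real d * (\<integral>x. (x ^ 4 - mG)\<^sup>2 \<partial>G)"
    using pim_var[OF PG iG4, of d] iG8 unfolding B_def Y_def mG_def p4T by auto
  have lT: "(\<integral>x. (x ^ 4 - mT)\<^sup>2 \<partial>T) \<le> (\<integral>x. x ^ 8 \<partial>T)"
    using var_le[OF PT iT4] iT8 unfolding mT_def p4T by auto
  have lG: "(\<integral>x. (x ^ 4 - mG)\<^sup>2 \<partial>G) \<le> (\<integral>x. x ^ 8 \<partial>G)"
    using var_le[OF PG iG4] iG8 unfolding mG_def p4T by auto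
  have mA: "(\<lambda>\<omega>. (A \<omega>)\<^sup>2) \<in> borel_measurable X" using iA by auto
  have mB: "(\<lambda>\<omega>. (B \<omega>)\<^sup>2) \<in> borel_measurable Y" using iB by auto
  have dfst: "distr J X fst = X" unfolding J_def by (rule prob_space.distr_pair_fst[OF PY])
  have dsnd: "distr J Y snd = Y" unfolding J_def by (rule distr_pair_snd'[OF PX SY])
  have mfst: "fst \<in> measurable J X" unfolding J_def by simp
  have msnd: "snd \<in> measurable J Y" unfolding J_def by simp
  have iA': "integrable J (\<lambda>\<omega>. (A (fst \<omega>))\<^sup>2)"
    using integrable_distr_eq[OF mfst mA] iA dfst by simp
  have iB': "integrable J (\<lambda>\<omega>. (B (snd \<omega>))\<^sup>2)"
    using integrable_distr_eq[OF msnd mB] iB dsnd by simp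
  have vA': "(\<integral>\<omega>. (A (fst \<omega>))\<^sup>2 \<partial>J) = (\<integral>\<omega>. (A \<omega>)\<^sup>2 \<partial>X)"
    using integral_distr[OF mfst mA] dfst by simp
  have vB': "(\<integral>\<omega>. (B (snd \<omega>))\<^sup>2 \<partial>J) = (\<integral>\<omega>. (B \<omega>)\<^sup>2 \<partial>Y)"
    using integral_distr[OF msnd mB] dsnd by simp
  have iu: "integrable J u" unfolding u_def using iA' iB' by auto
  have Iu: "(\<integral>\<omega>. u \<omega> \<partial>J) = 3 * a\<^sup>2 * ((\<integral>\<omega>. (B \<omega>)\<^sup>2 \<partial>Y) + (\<integral>\<omega>. (A \<omega>)\<^sup>2 \<partial>X) + D\<^sup>2)"
    unfolding u_def using iA' iB' vA' vB' by (simp add: J.prob_space)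
  define S where "S = (\<lambda>\<omega>::(nat\<Rightarrow>real)\<times>(nat\<Rightarrow>real). \<Sum>i<d. a * ((snd \<omega> i) ^ 4 - (fst \<omega> i) ^ 4))"
  have Seq: "S \<omega> = a * (B (snd \<omega>) - A (fst \<omega>) + D)" for \<omega>
    unfolding S_def A_def B_def D_def
    by (simp add: sum_distrib_left[symmetric] sum_subtractf algebra_simps)
  have Su: "(S \<omega>)\<^sup>2 \<le> u \<omega>" for \<omega>
  proof -
    have "(S \<omega>)\<^sup>2 = a\<^sup>2 * (B (snd \<omega>) - A (fst \<omega>) + D)\<^sup>2" by (simp add: Seq power_mult_distrib)
    also have "\<dots> \<le> a\<^sup>2 * (3 * ((B (snd \<omega>))\<^sup>2 + (A (fst \<omega>))\<^sup>2 + D\<^sup>2))"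
      by (intro mult_left_mono sq3) auto
    finally show ?thesis by (simp add: u_def algebra_simps)
  qed
  have mu: "u \<in> borel_measurable J" using iu by auto
  have sub: "{\<omega> \<in> space J. \<epsilon> < \<bar>S \<omega>\<bar>} \<subseteq> {\<omega> \<in> space J. \<epsilon>\<^sup>2 \<le> u \<omega>}"
  proof safe
    fix \<omega> assume "\<epsilon> < \<bar>S \<omega>\<bar>"
    then have "\<epsilon>\<^sup>2 < (S \<omega>)\<^sup>2" using eps by (metis abs_le_square_iff abs_of_pos not_le power2_abs)
    then show "\<epsilon>\<^sup>2 \<le> u \<omega>" using Su[of \<omega>] by linarith
  qed
  have usets: "{\<omega> \<in> space J. \<epsilon>\<^sup>2 \<le> u \<omega>} \<in> sets J" using mu by measurable
  have "measure J {\<omega> \<in> space J. \<epsilon> < \<bar>S \<omega>\<bar>} \<le> measure J {\<omega> \<in> space J. \<epsilon>\<^sup>2 \<le> u \<omega>}"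
    by (rule J.finite_measure_mono[OF sub usets])
  also have "\<dots> \<le> (\<integral>\<omega>. u \<omega> \<partial>J) / \<epsilon>\<^sup>2"
    by (rule integral_Markov_inequality_measure[OF iu, of "space J"]) (use eps in \<open>auto simp: u_def\<close>)
  also have "\<dots> \<le> 3 * a\<^sup>2 * (real d * (\<integral>x. x ^ 8 \<partial>G) + real d * (\<integral>x. x ^ 8 \<partial>T) + D\<^sup>2) / \<epsilon>\<^sup>2"
  proof -
    have "(\<integral>\<omega>. (B \<omega>)\<^sup>2 \<partial>Y) + (\<integral>\<omega>. (A \<omega>)\<^sup>2 \<partial>X) + D\<^sup>2 \<le> real d * (\<integral>x. x ^ 8 \<partial>G) + real d * (\<integral>x. x ^ 8 \<partial>T) + D\<^sup>2"
      unfolding vA vB using lT lG by (intro add_mono mult_left_mono) auto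
    then show ?thesis unfolding Iu using eps by (intro divide_right_mono mult_left_mono) auto
  qed
  finally show ?thesis unfolding J_def X_def Y_def S_def D_def mT_def mG_def by simp
qed



lemma ptw_lemma:
  fixes f :: "real \<Rightarrow> real" and u :: real
  assumes fpos: "\<forall>x. f x > 0"
    and f_C5: "\<forall>k<5. \<forall>x. ((deriv ^^ k) f has_real_derivative (deriv ^^ Suc k) f x) (at x)"
    and f0: "f 0 = 1" and f'0: "deriv f 0 = 0"
  shows "((\<lambda>\<beta>. f (u / sqrt \<beta>) powr \<beta>) \<longlongrightarrow> exp ((deriv ^^ 2) (\<lambda>x. ln (f x)) 0 * u\<^sup>2 / 2)) at_top"
proof -
  define f1 where "f1 = deriv f"
  define f2 where "f2 = deriv (deriv f)"
  have d0: "(f has_real_derivative f1 x) (at x)" for x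
    using spec[OF f_C5, of 0] by (auto simp: f1_def)
  have d1: "(f1 has_real_derivative f2 x) (at x)" for x
    using spec[OF f_C5, of 1] by (auto simp: f1_def f2_def)
  have d2: "\<exists>D. (f2 has_real_derivative D) (at x)" for x
    using spec[OF f_C5, of 2] by (auto simp: f2_def numeral_2_eq_2)
  have cf2: "isCont f2 x" for x using d2 DERIV_isCont by blast
  have cf1: "isCont f1 x" for x using d1 DERIV_isCont by blast
  have cf: "isCont f x" for x using d0 DERIV_isCont by blast
  define h where "h = (\<lambda>x. ln (f x))"
  define h1 where "h1 = (\<lambda>x. f1 x / f x)"
  define h2 where "h2 = (\<lambda>x. (f2 x * f x - f1 x * f1 x) / (f x * f x))"
  have dh: "(h has_real_derivative h1 x) (at x)" for x
    unfolding h_def h1_def using fpos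
    by (auto intro!: derivative_eq_intros d0 simp: field_simps)
  have dh1: "(h1 has_real_derivative h2 x) (at x)" for x
    unfolding h1_def h2_def using fpos[rule_format, of x]
    by (intro DERIV_divide d1 d0) auto
  have deq: "deriv h = h1" using dh by (auto intro!: DERIV_imp_deriv ext)
  have d2eq: "(deriv ^^ 2) (\<lambda>x. ln (f x)) 0 = h2 0"
    using deq dh1 by (simp add: numeral_2_eq_2 h_def[symmetric] DERIV_imp_deriv)
  have ch2: "isCont h2 0"
    unfolding h2_def using fpos[rule_format, of 0] cf cf1 cf2 by (intro continuous_intros) auto
  have h0: "h 0 = 0" by (simp add: h_def f0)
  have h10: "h1 0 = 0" by (simp add: h1_def f1_def f'0 f0)
  have taylor: "\<exists>\<xi>. \<bar>\<xi>\<bar> \<le> \<bar>t\<bar> \<and> h t = h2 \<xi> / 2 * t\<^sup>2" for t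
  proof -
    define df where "df = (\<lambda>n::nat. if n = 0 then h else if n = 1 then h1 else h2)"
    have "\<exists>\<xi>. \<bar>\<xi>\<bar> \<le> \<bar>t\<bar> \<and> h t = (\<Sum>m<2. df m 0 / (fact m) * t ^ m) + df 2 \<xi> / (fact 2) * t ^ 2"
      by (rule Maclaurin_bi_le) (use dh dh1 in \<open>auto simp: df_def less_2_cases_iff\<close>)
    then show ?thesis using h0 h10 by (simp add: df_def numeral_2_eq_2)
  qed
  define \<xi> where "\<xi> = (\<lambda>\<beta>. SOME \<xi>. \<bar>\<xi>\<bar> \<le> \<bar>u / sqrt \<beta>\<bar> \<and> h (u / sqrt \<beta>) = h2 \<xi> / 2 * (u / sqrt \<beta>)\<^sup>2)"
  have \<xi>p: "\<bar>\<xi> \<beta>\<bar> \<le> \<bar>u / sqrt \<beta>\<bar> \<and> h (u / sqrt \<beta>) = h2 (\<xi> \<beta>) / 2 * (u / sqrt \<beta>)\<^sup>2" for \<beta>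
    unfolding \<xi>_def by (rule someI_ex) (rule taylor)
  have \<xi>0: "(\<xi> \<longlongrightarrow> 0) at_top"
  proof (rule Lim_null_comparison)
    show "\<forall>\<^sub>F \<beta> in at_top. norm (\<xi> \<beta>) \<le> \<bar>u\<bar> / sqrt \<beta>"
      using eventually_gt_at_top[of 0]
    proof eventually_elim
      case (elim \<beta>)
      have "\<bar>sqrt \<beta>\<bar> = sqrt \<beta>" using elim by simp
      then show ?case using \<xi>p[of \<beta>] by (simp add: abs_divide)
    qed
    show "((\<lambda>\<beta>. \<bar>u\<bar> / sqrt \<beta>) \<longlongrightarrow> 0) at_top" by real_asymp
  qed
  have lim2: "((\<lambda>\<beta>. h2 (\<xi> \<beta>)) \<longlongrightarrow> h2 0) at_top"
    by (rule isCont_tendsto_compose[OF ch2 \<xi>0])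
  have ev: "\<forall>\<^sub>F \<beta> in at_top. exp (h2 (\<xi> \<beta>) * u\<^sup>2 / 2) = f (u / sqrt \<beta>) powr \<beta>"
    using eventually_gt_at_top[of 0]
  proof eventually_elim
    case (elim \<beta>)
    have "f (u / sqrt \<beta>) powr \<beta> = exp (\<beta> * h (u / sqrt \<beta>))"
      using fpos[rule_format, of "u / sqrt \<beta>"] by (simp add: powr_def h_def)
    also have "\<beta> * h (u / sqrt \<beta>) = h2 (\<xi> \<beta>) * u\<^sup>2 / 2"
      using \<xi>p[of \<beta>] elim by (simp add: power_divide)
    finally show ?case by simp
  qed
  have "((\<lambda>\<beta>. exp (h2 (\<xi> \<beta>) * u\<^sup>2 / 2)) \<longlongrightarrow> exp (h2 0 * u\<^sup>2 / 2)) at_top"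
    by (auto intro!: tendsto_intros lim2)
  then show ?thesis using tendsto_cong[OF ev] d2eq by simp
qed



lemma cap_lemma:
  fixes f :: "real \<Rightarrow> real"
  assumes Hn: "H < 0" and d: "0 < \<delta>" "\<delta> < M"
  and ci: "\<forall>x. \<bar>x\<bar> < \<delta> \<longrightarrow> f x \<le> exp (- (x\<^sup>2 * \<bar>H\<bar> / 4))"
  and co: "\<forall>x. \<delta> \<le> \<bar>x\<bar> \<and> \<bar>x\<bar> \<le> M \<longrightarrow> f x \<le> exp (- (\<delta>\<^sup>2 * \<bar>H\<bar> / 4))"
  and x: "\<bar>x\<bar> \<le> M"
  shows "f x \<le> exp (- ((\<delta>\<^sup>2 * \<bar>H\<bar> / (4 * M\<^sup>2)) * x\<^sup>2))"
proof -
  have M2: "M\<^sup>2 > 0" using d by simp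
  have dM: "\<delta>\<^sup>2 \<le> M\<^sup>2" using d by (intro power_mono) auto
  have xM: "x\<^sup>2 \<le> M\<^sup>2" using x by (metis abs_le_square_iff abs_of_nonneg d(1) d(2) less_imp_le order.trans power2_abs abs_ge_zero)
  have eq: "(\<delta>\<^sup>2 * \<bar>H\<bar> / (4 * M\<^sup>2)) * x\<^sup>2 = (\<delta>\<^sup>2 * (\<bar>H\<bar> * x\<^sup>2)) / (4 * M\<^sup>2)" by simp
  show ?thesis
  proof (cases "\<bar>x\<bar> < \<delta>")
    case True
    have "\<delta>\<^sup>2 * (\<bar>H\<bar> * x\<^sup>2) \<le> M\<^sup>2 * (\<bar>H\<bar> * x\<^sup>2)" using dM by (intro mult_right_mono) auto
    then have "(\<delta>\<^sup>2 * (\<bar>H\<bar> * x\<^sup>2)) / (4 * M\<^sup>2) \<le> (M\<^sup>2 * (\<bar>H\<bar> * x\<^sup>2)) / (4 * M\<^sup>2)"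
      using M2 by (intro divide_right_mono) auto
    also have "\<dots> = x\<^sup>2 * \<bar>H\<bar> / 4" using M2 by (simp add: field_simps)
    finally have "exp (- (x\<^sup>2 * \<bar>H\<bar> / 4)) \<le> exp (- ((\<delta>\<^sup>2 * \<bar>H\<bar> / (4 * M\<^sup>2)) * x\<^sup>2))"
      unfolding eq by simp
    then show ?thesis using ci True by (meson order.trans)
  next
    case False
    have "\<delta>\<^sup>2 * (\<bar>H\<bar> * x\<^sup>2) \<le> \<delta>\<^sup>2 * (\<bar>H\<bar> * M\<^sup>2)" using xM by (intro mult_left_mono) auto
    then have "(\<delta>\<^sup>2 * (\<bar>H\<bar> * x\<^sup>2)) / (4 * M\<^sup>2) \<le> (\<delta>\<^sup>2 * (\<bar>H\<bar> * M\<^sup>2)) / (4 * M\<^sup>2)"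
      using M2 by (intro divide_right_mono) auto
    also have "\<dots> = \<delta>\<^sup>2 * \<bar>H\<bar> / 4" using M2 by (simp add: field_simps)
    finally have "exp (- (\<delta>\<^sup>2 * \<bar>H\<bar> / 4)) \<le> exp (- ((\<delta>\<^sup>2 * \<bar>H\<bar> / (4 * M\<^sup>2)) * x\<^sup>2))"
      unfolding eq by simp
    then show ?thesis using co False x by (meson not_less order.trans)
  qed
qed

lemma q_lemma:
  fixes f :: "real \<Rightarrow> real"
  assumes cont: "continuous_on UNIV f" and lt1: "\<forall>x. x \<noteq> 0 \<longrightarrow> f x < 1"
  and M: "M > 0" and K: "K > 0" and g: "\<gamma> > 0"
  and tails: "\<forall>x. \<bar>x\<bar> > M \<longrightarrow> f x * \<bar>x\<bar> powr \<gamma> < K"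
  and fpos: "\<forall>x. f x > 0"
  shows "\<exists>q. 0 < q \<and> q < 1 \<and> (\<forall>x. M < \<bar>x\<bar> \<longrightarrow> f x \<le> q)"
proof -
  define R where "R = M + (2 * K) powr (1 / \<gamma>)"
  have RM: "M < R" using K by (simp add: R_def)
  have big: "f x < 1 / 2" if "R < \<bar>x\<bar>" for x
  proof -
    have xM: "M < \<bar>x\<bar>" using that RM by linarith
    have "2 * K = ((2 * K) powr (1 / \<gamma>)) powr \<gamma>" using K g by (simp add: powr_powr)
    also have "\<dots> \<le> \<bar>x\<bar> powr \<gamma>"
      using that M g by (intro powr_mono2) (auto simp: R_def)
    finally have 1: "2 * K \<le> \<bar>x\<bar> powr \<gamma>" .
    have "f x * \<bar>x\<bar> powr \<gamma> < K" using tails xM by auto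
    then have "f x * (2 * K) < K" using 1 fpos[rule_format, of x]
      by (smt (verit) mult_left_mono)
    then show ?thesis using K by (simp add: field_simps)
  qed
  define S where "S = {-R..-M} \<union> {M..R}"
  have cS: "compact S" unfolding S_def by (intro compact_Un compact_Icc)
  have nS: "S \<noteq> {}" using RM unfolding S_def by auto
  obtain x0 where x0: "x0 \<in> S" "\<And>y. y \<in> S \<Longrightarrow> f y \<le> f x0"
    using continuous_attains_sup[OF cS nS continuous_on_subset[OF cont]] by auto
  have x0nz: "x0 \<noteq> 0" using x0(1) M unfolding S_def by auto
  define q where "q = max (f x0) (1/2)"
  have "q < 1" using lt1 x0nz by (simp add: q_def)
  moreover have "0 < q" by (simp add: q_def)
  moreover have "f x \<le> q" if "M < \<bar>x\<bar>" for x
  proof (cases "\<bar>x\<bar> \<le> R")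
    case True
    then have "x \<in> S" using that unfolding S_def by auto
    then show ?thesis using x0(2)[of x] by (simp add: q_def)
  next
    case False
    then show ?thesis using big[of x] by (simp add: q_def)
  qed
  ultimately show ?thesis by blast
qed


lemma gauss_mom:
  fixes s :: real and j :: nat assumes s: "s > 0"
  shows "sets (density lborel (normal_density 0 s)) = sets borel"
    and "integrable (density lborel (normal_density 0 s)) (\<lambda>x. x ^ (2 * j))"
    and "(\<integral>x. x ^ (2 * j) \<partial>density lborel (normal_density 0 s)) = fact (2 * j) / ((2 / s\<^sup>2) ^ j * fact j)"
proof -
  show "sets (density lborel (normal_density 0 s)) = sets borel" by simp
  show "integrable (density lborel (normal_density 0 s)) (\<lambda>x. x ^ (2 * j))"
    by (subst integrable_density) (use integrable_normal_moment[OF s, of 0 "2*j"] in auto)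
  show "(\<integral>x. x ^ (2 * j) \<partial>density lborel (normal_density 0 s)) = fact (2 * j) / ((2 / s\<^sup>2) ^ j * fact j)"
    by (subst integral_density) (use integral_normal_moment_even[OF s, of 0 j] in auto)
qed

lemma gauss_C:
  fixes H :: real and j :: nat assumes H: "H < 0"
  defines "\<sigma> \<equiv> 1 / sqrt (- H)"
  shows "(\<integral>u. u ^ (2 * j) * exp (H * u\<^sup>2 / 2) \<partial>lborel) = sqrt (2 * pi * \<sigma>\<^sup>2) * (fact (2 * j) / ((2 / \<sigma>\<^sup>2) ^ j * fact j))"
proof -
  have sp: "\<sigma> > 0" using H by (simp add: \<sigma>_def)
  have s2: "\<sigma>\<^sup>2 = - 1 / H" using H by (simp add: \<sigma>_def power_divide)
  have eq: "(\<lambda>u. u ^ (2 * j) * exp (H * u\<^sup>2 / 2)) = (\<lambda>u. sqrt (2 * pi * \<sigma>\<^sup>2) * (normal_density 0 \<sigma> u * (u - 0) ^ (2 * j)))"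
  proof
    fix u
    have pos: "sqrt (2 * pi * \<sigma>\<^sup>2) > 0" using sp by simp
    have e: "(u - 0)\<^sup>2 / (2 * \<sigma>\<^sup>2) = - (H * u\<^sup>2 / 2)" using H by (simp add: s2 field_simps)
    show "u ^ (2 * j) * exp (H * u\<^sup>2 / 2) = sqrt (2 * pi * \<sigma>\<^sup>2) * (normal_density 0 \<sigma> u * (u - 0) ^ (2 * j))"
      unfolding normal_density_def using pos e sp by (simp add: field_simps)
  qed
  show ?thesis unfolding eq integral_mult_right_zero integral_normal_moment_even[OF sp] ..
qed



lemma sqrt_pow_even: "0 \<le> (b::real) \<Longrightarrow> sqrt b ^ (2 * n) = b ^ n"
  by (simp add: power_mult)

theorem lemma2:
  fixes f :: "real \<Rightarrow> real" and L \<gamma> M K \<delta>\<^sub>2 l :: real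
  defines "h \<equiv> (\<lambda>x. ln (f x))"
  defines "H \<equiv> (deriv ^^ 2) h 0"
  assumes f_pos: "\<forall>x. f x > 0"
    and f_C5: "\<forall>k<5. \<forall>x. ((deriv ^^ k) f has_real_derivative (deriv ^^ Suc k) f x) (at x)"
    and f_C5_cont: "continuous_on UNIV ((deriv ^^ 5) f)"
    and f0: "f 0 = 1" and f'0: "deriv f 0 = 0"
    and unique_max: "\<forall>x. x \<noteq> 0 \<longrightarrow> f x < f 0"
    and H_neg: "H < 0"
    and L_pos: "L > 0" and h5_bound: "\<forall>x. \<bar>(deriv ^^ 5) h x\<bar> < L"
    and tail_pos: "\<gamma> > 0" "M > 0" "K > 0"
    and tails: "\<forall>x. \<bar>x\<bar> > M \<longrightarrow> f x * \<bar>x\<bar> powr \<gamma> < K"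
    and cap_delta: "0 < \<delta>\<^sub>2" "\<delta>\<^sub>2 < M"
    and cap_inner: "\<forall>x. \<bar>x\<bar> < \<delta>\<^sub>2 \<longrightarrow> f x \<le> exp (- (x\<^sup>2 * \<bar>H\<bar> / 4))"
    and cap_outer: "\<forall>x. \<delta>\<^sub>2 \<le> \<bar>x\<bar> \<and> \<bar>x\<bar> \<le> M \<longrightarrow> f x \<le> exp (- (\<delta>\<^sub>2\<^sup>2 * \<bar>H\<bar> / 4))"
    and l_pos: "l > 0"
  shows "\<forall>\<epsilon>>0. ((\<lambda>d. measure (joint_measure f H (l * real d) d)
            {\<omega> \<in> space (joint_measure f H (l * real d) d).
               \<bar>\<Sum>i<d. (l * real d) * (deriv ^^ 4) h 0 / 24 * ((snd \<omega> i)^4 - (fst \<omega> i)^4)\<bar> > \<epsilon>})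
          \<longlongrightarrow> 0) sequentially"
proof -
  have d0: "(f has_real_derivative deriv f x) (at x)" for x
    using spec[OF f_C5, of 0] by simp
  have cont: "continuous_on UNIV f"
    by (intro continuous_at_imp_continuous_on ballI DERIV_isCont[OF d0])
  have fmeas: "f \<in> borel_measurable borel" by (rule borel_measurable_continuous_onI[OF cont])
  have fpos': "\<And>x. f x > 0" using f_pos by auto
  have lt1: "\<forall>x. x \<noteq> 0 \<longrightarrow> f x < 1" using unique_max f0 by auto
  have fle1: "\<And>x. f x \<le> 1" using lt1 f0 by (metis less_imp_le order_refl)
  obtain q where q: "0 < q" "q < 1" "\<forall>x. M < \<bar>x\<bar> \<longrightarrow> f x \<le> q"
    using q_lemma[OF cont lt1 tail_pos(2) tail_pos(3) tail_pos(1) tails f_pos] by blast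
  have fq: "\<And>x. M < \<bar>x\<bar> \<Longrightarrow> f x \<le> q" using q(3) by auto
  have tail': "\<And>x. M < \<bar>x\<bar> \<Longrightarrow> f x * \<bar>x\<bar> powr \<gamma> < K" using tails by auto
  define c where "c = \<delta>\<^sub>2\<^sup>2 * \<bar>H\<bar> / (4 * M\<^sup>2)"
  have cpos: "c > 0" unfolding c_def using cap_delta H_neg tail_pos
    by (intro divide_pos_pos mult_pos_pos) auto
  have cap: "\<And>x. \<bar>x\<bar> \<le> M \<Longrightarrow> f x \<le> exp (- (c * x\<^sup>2))"
    using cap_lemma[OF H_neg cap_delta cap_inner cap_outer] by (simp add: c_def)
  have Heq: "(deriv ^^ 2) (\<lambda>x. ln (f x)) 0 = H" by (simp add: H_def h_def)
  have ptw: "\<And>u. ((\<lambda>\<beta>. f (u / sqrt \<beta>) powr \<beta>) \<longlongrightarrow> exp (H * u\<^sup>2 / 2)) at_top"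
    using ptw_lemma[OF f_pos f_C5 f0 f'0] Heq by simp
  note lap = laplace[OF fpos' fmeas fle1 tail_pos(2) tail_pos(3) tail_pos(1) cpos cap q(1) q(2) fq tail' ptw]
  note tp = tilted_props[where f=f and M=M and K=K and \<gamma>=\<gamma> and c=c and q=q and H=H, OF fpos' fmeas fle1 tail_pos(2) tail_pos(3) tail_pos(1) cpos cap q(1) q(2) fq tail' ptw]
  define P where "P = sqrt (2 * pi * (1 / sqrt (- H))\<^sup>2)"
  have Ppos: "P > 0" using H_neg by (simp add: P_def)
  have s2: "(1 / sqrt (- H))\<^sup>2 = - 1 / H" using H_neg by (simp add: power_divide)
  have C0: "(\<integral>u. exp (H * u\<^sup>2 / 2) \<partial>lborel) = P"
    using gauss_C[OF H_neg, of 0] by (simp add: P_def)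
  have C4: "(\<integral>u. u ^ 4 * exp (H * u\<^sup>2 / 2) \<partial>lborel) = P * (3 / H\<^sup>2)"
    using gauss_C[OF H_neg, of 2] H_neg by (simp add: P_def s2 eval_nat_numeral field_simps)
  define J where "J = (\<lambda>k \<beta>. \<integral>x. x ^ k * f x powr \<beta> \<partial>lborel)"
  define C8 where "C8 = (\<integral>u. u ^ 8 * exp (H * u\<^sup>2 / 2) \<partial>lborel)"
  have L0: "((\<lambda>\<beta>. sqrt \<beta> * J 0 \<beta>) \<longlongrightarrow> P) at_top"
    using lap[of 0] C0 by (simp add: J_def)
  have L4: "((\<lambda>\<beta>. sqrt \<beta> ^ 5 * J 4 \<beta>) \<longlongrightarrow> P * (3 / H\<^sup>2)) at_top"
    using lap[of 4] C4 by (simp add: J_def)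
  have L8: "((\<lambda>\<beta>. sqrt \<beta> ^ 9 * J 8 \<beta>) \<longlongrightarrow> C8) at_top"
    using lap[of 8] by (simp add: J_def C8_def)
  have kb: "(real k + 2) / \<gamma> \<le> \<beta>" if "k \<le> 8" "10 / \<gamma> \<le> \<beta>" for k :: nat and \<beta>
  proof -
    have "(real k + 2) / \<gamma> \<le> 10 / \<gamma>" using that tail_pos(1) by (intro divide_right_mono) auto
    then show ?thesis using that by linarith
  qed
  define good where "good = (\<lambda>\<beta>. 10 / \<gamma> \<le> \<beta> \<and> 0 < \<beta> \<and> 0 < J 0 \<beta>)"
  have evgood: "\<forall>\<^sub>F \<beta> in at_top. good \<beta>"
  proof -
    have "\<forall>\<^sub>F \<beta> in at_top. 0 < sqrt \<beta> * J 0 \<beta>" by (rule order_tendstoD(1)[OF L0 Ppos])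
    moreover have "\<forall>\<^sub>F \<beta> in at_top. 10 / \<gamma> \<le> \<beta>" by (rule eventually_ge_at_top)
    moreover have "\<forall>\<^sub>F \<beta> in at_top. 0 < (\<beta>::real)" using eventually_gt_at_top[of "0::real"] by simp
    ultimately show ?thesis unfolding good_def
      by eventually_elim (auto simp: zero_less_mult_iff)
  qed
  define m4 where "m4 = (\<lambda>\<beta>. \<integral>x. x ^ 4 \<partial>tilted_measure f \<beta>)"
  define m8 where "m8 = (\<lambda>\<beta>. \<integral>x. x ^ 8 \<partial>tilted_measure f \<beta>)"
  have m4eq: "m4 \<beta> = J 4 \<beta> / J 0 \<beta>" and m8eq: "m8 \<beta> = J 8 \<beta> / J 0 \<beta>" if "good \<beta>" for \<beta>
    using tp(4)[of 4 \<beta>] tp(4)[of 8 \<beta>] kb[of 4 \<beta>] kb[of 8 \<beta>] that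
    by (auto simp: good_def m4_def m8_def J_def)
  have Ex: "((\<lambda>\<beta>. \<beta>\<^sup>2 * m4 \<beta>) \<longlongrightarrow> 3 / H\<^sup>2) at_top"
  proof -
    have "((\<lambda>\<beta>. (sqrt \<beta> ^ 5 * J 4 \<beta>) / (sqrt \<beta> * J 0 \<beta>)) \<longlongrightarrow> (P * (3 / H\<^sup>2)) / P) at_top"
      by (intro tendsto_divide L4 L0) (use Ppos in auto)
    moreover have "\<forall>\<^sub>F \<beta> in at_top. (sqrt \<beta> ^ 5 * J 4 \<beta>) / (sqrt \<beta> * J 0 \<beta>) = \<beta>\<^sup>2 * m4 \<beta>"
      using evgood
    proof eventually_elim
      case (elim \<beta>)
      then have b: "0 < \<beta>" "0 < J 0 \<beta>" by (auto simp: good_def)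
      have e5: "sqrt \<beta> ^ 5 = sqrt \<beta> * sqrt \<beta> ^ 4" by (simp add: numeral_eq_Suc)
      have "sqrt \<beta> ^ 5 = sqrt \<beta> * \<beta>\<^sup>2" unfolding e5 using sqrt_pow_even[of \<beta> 2] b by simp
      then show ?case using m4eq[OF elim] b by simp
    qed
    ultimately show ?thesis using Ppos by (simp add: tendsto_cong)
  qed
  have Fx: "((\<lambda>\<beta>. \<beta> ^ 4 * m8 \<beta>) \<longlongrightarrow> C8 / P) at_top"
  proof -
    have "((\<lambda>\<beta>. (sqrt \<beta> ^ 9 * J 8 \<beta>) / (sqrt \<beta> * J 0 \<beta>)) \<longlongrightarrow> C8 / P) at_top"
      by (intro tendsto_divide L8 L0) (use Ppos in auto)
    moreover have "\<forall>\<^sub>F \<beta> in at_top. (sqrt \<beta> ^ 9 * J 8 \<beta>) / (sqrt \<beta> * J 0 \<beta>) = \<beta> ^ 4 * m8 \<beta>"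
      using evgood
    proof eventually_elim
      case (elim \<beta>)
      then have b: "0 < \<beta>" "0 < J 0 \<beta>" by (auto simp: good_def)
      have e9: "sqrt \<beta> ^ 9 = sqrt \<beta> * sqrt \<beta> ^ 8" by (simp add: numeral_eq_Suc)
      have "sqrt \<beta> ^ 9 = sqrt \<beta> * \<beta> ^ 4" unfolding e9 using sqrt_pow_even[of \<beta> 4] b by simp
      then show ?case using m8eq[OF elim] b by simp
    qed
    ultimately show ?thesis by (simp add: tendsto_cong)
  qed
  define sG where "sG = (\<lambda>\<beta>::real. 1 / sqrt (\<beta> * \<bar>H\<bar>))"
  define g4 where "g4 = (\<lambda>\<beta>. \<integral>x. x ^ 4 \<partial>density lborel (normal_density 0 (1 / sqrt (\<beta> * \<bar>H\<bar>))))"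
  define g8 where "g8 = (\<lambda>\<beta>. \<integral>x. x ^ 8 \<partial>density lborel (normal_density 0 (1 / sqrt (\<beta> * \<bar>H\<bar>))))"
  have sGpos: "0 < sG \<beta>" if "0 < \<beta>" for \<beta> using that H_neg by (simp add: sG_def mult_pos_neg)
  have sG2: "(sG \<beta>)\<^sup>2 = 1 / (\<beta> * \<bar>H\<bar>)" if "0 < \<beta>" for \<beta>
    using that H_neg mult_pos_neg[of \<beta> H] by (simp add: sG_def power_divide)
  have Ey: "\<beta>\<^sup>2 * g4 \<beta> = 3 / H\<^sup>2" if b: "0 < \<beta>" for \<beta>
  proof -
    have "g4 \<beta> = fact (2 * 2) / ((2 / (sG \<beta>)\<^sup>2) ^ 2 * fact 2)"
      using gauss_mom(3)[OF sGpos[OF b], of 2] by (simp add: g4_def sG_def)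
    also have "\<dots> = 3 / (\<beta>\<^sup>2 * H\<^sup>2)"
      unfolding sG2[OF b] using b H_neg by (simp add: eval_nat_numeral field_simps power2_eq_square)
    finally show ?thesis using b by simp
  qed
  have Fy: "\<beta> ^ 4 * g8 \<beta> = 105 / H ^ 4" if b: "0 < \<beta>" for \<beta>
  proof -
    have "g8 \<beta> = fact (2 * 4) / ((2 / (sG \<beta>)\<^sup>2) ^ 4 * fact 4)"
      using gauss_mom(3)[OF sGpos[OF b], of 4] by (simp add: g8_def sG_def)
    also have "\<dots> = 105 / (\<beta> ^ 4 * H ^ 4)"
      unfolding sG2[OF b] using b H_neg by (simp add: eval_nat_numeral field_simps power2_eq_square)
    finally show ?thesis using b by simp
  qed
  define D4 where "D4 = (deriv ^^ 4) h 0"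
  show ?thesis
  proof (intro allI impI)
    fix \<epsilon> :: real assume eps: "\<epsilon> > 0"
    define Rf where "Rf = (\<lambda>\<beta>. 3 * (\<beta> * D4 / 24)\<^sup>2 * ((\<beta> / l) * g8 \<beta> + (\<beta> / l) * m8 \<beta>
                              + ((\<beta> / l) * (g4 \<beta> - m4 \<beta>))\<^sup>2) / \<epsilon>\<^sup>2)"
    have Rf_eq: "\<forall>\<^sub>F \<beta> in at_top. 3 * (D4 / 24)\<^sup>2 / \<epsilon>\<^sup>2 * ((\<beta> ^ 4 * g8 \<beta> + \<beta> ^ 4 * m8 \<beta>) / (l * \<beta>)
                 + (\<beta>\<^sup>2 * g4 \<beta> - \<beta>\<^sup>2 * m4 \<beta>)\<^sup>2 / l\<^sup>2) = Rf \<beta>"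
      using eventually_gt_at_top[of "0::real"]
    proof eventually_elim
      case (elim \<beta>)
      show ?case using elim l_pos eps unfolding Rf_def
        by (simp add: field_simps power2_eq_square eval_nat_numeral)
    qed
    have Rlim: "(Rf \<longlongrightarrow> 0) at_top"
    proof -
      have Fy': "((\<lambda>\<beta>. \<beta> ^ 4 * g8 \<beta>) \<longlongrightarrow> 105 / H ^ 4) at_top"
      proof -
        have "\<forall>\<^sub>F \<beta> in at_top. \<beta> ^ 4 * g8 \<beta> = 105 / H ^ 4"
          using eventually_gt_at_top[of "0::real"] by eventually_elim (rule Fy)
        then show ?thesis by (rule tendsto_cong[THEN iffD2, OF _ tendsto_const])
      qed
      have Ey': "((\<lambda>\<beta>. \<beta>\<^sup>2 * g4 \<beta>) \<longlongrightarrow> 3 / H\<^sup>2) at_top"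
      proof -
        have "\<forall>\<^sub>F \<beta> in at_top. \<beta>\<^sup>2 * g4 \<beta> = 3 / H\<^sup>2"
          using eventually_gt_at_top[of "0::real"] by eventually_elim (rule Ey)
        then show ?thesis by (rule tendsto_cong[THEN iffD2, OF _ tendsto_const])
      qed
      have inf: "filterlim (\<lambda>\<beta>::real. l * \<beta>) at_infinity at_top"
        using l_pos by (intro filterlim_at_top_imp_at_infinity) real_asymp
      have t1: "((\<lambda>\<beta>. (\<beta> ^ 4 * g8 \<beta> + \<beta> ^ 4 * m8 \<beta>) / (l * \<beta>)) \<longlongrightarrow> 0) at_top"
        by (rule tendsto_divide_0[OF tendsto_add[OF Fy' Fx] inf])
      have t2: "((\<lambda>\<beta>. (\<beta>\<^sup>2 * g4 \<beta> - \<beta>\<^sup>2 * m4 \<beta>)\<^sup>2 / l\<^sup>2) \<longlongrightarrow> (3 / H\<^sup>2 - 3 / H\<^sup>2)\<^sup>2 / l\<^sup>2) at_top"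
        using l_pos by (intro tendsto_intros Ey' Ex) auto
      have "((\<lambda>\<beta>. 3 * (D4 / 24)\<^sup>2 / \<epsilon>\<^sup>2 * ((\<beta> ^ 4 * g8 \<beta> + \<beta> ^ 4 * m8 \<beta>) / (l * \<beta>)
                 + (\<beta>\<^sup>2 * g4 \<beta> - \<beta>\<^sup>2 * m4 \<beta>)\<^sup>2 / l\<^sup>2)) \<longlongrightarrow> 3 * (D4 / 24)\<^sup>2 / \<epsilon>\<^sup>2 * (0 + (3 / H\<^sup>2 - 3 / H\<^sup>2)\<^sup>2 / l\<^sup>2)) at_top"
        by (intro tendsto_intros t1 t2)
      then show ?thesis using tendsto_cong[OF Rf_eq] by simp
    qed
    have flim: "filterlim (\<lambda>d::nat. l * real d) at_top sequentially"
      by (rule filterlim_tendsto_pos_mult_at_top[OF tendsto_const l_pos filterlim_real_sequentially])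
    have Rseq: "((\<lambda>d. Rf (l * real d)) \<longlongrightarrow> 0) sequentially"
      by (rule filterlim_compose[OF Rlim flim])
    have evg: "\<forall>\<^sub>F d in sequentially. good (l * real d)"
      using filterlim_iff[THEN iffD1, OF flim, rule_format, OF evgood] .
    have bound: "\<forall>\<^sub>F d in sequentially. measure (joint_measure f H (l * real d) d)
            {\<omega> \<in> space (joint_measure f H (l * real d) d).
               \<bar>\<Sum>i<d. (l * real d) * (deriv ^^ 4) h 0 / 24 * ((snd \<omega> i)^4 - (fst \<omega> i)^4)\<bar> > \<epsilon>}
            \<le> Rf (l * real d)"
      using evg
    proof eventually_elim
      case (elim d)
      define \<beta> where "\<beta> = l * real d"
      have gb: "good \<beta>" using elim by (simp add: \<beta>_def)
      then have b: "10 / \<gamma> \<le> \<beta>" "0 < \<beta>" "0 < J 0 \<beta>" by (auto simp: good_def)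
      have N: "(\<integral>x. f x powr \<beta> \<partial>lborel) > 0" using b(3) by (simp add: J_def)
      have sp: "0 < 1 / sqrt (\<beta> * \<bar>H\<bar>)" using b H_neg by (simp add: mult_pos_neg)
      have k4: "(real 4 + 2) / \<gamma> \<le> \<beta>" using kb[of 4 \<beta>] b by simp
      have k8: "(real 8 + 2) / \<gamma> \<le> \<beta>" using kb[of 8 \<beta>] b by simp
      have PT: "prob_space (tilted_measure f \<beta>)" by (rule tp(1)[where k=4]) (use k4 N in auto)
      have sT: "sets (tilted_measure f \<beta>) = sets borel" by (rule tp(2)[where k=4]) (use k4 N in auto)
      have iT4: "integrable (tilted_measure f \<beta>) (\<lambda>x. x ^ 4)" by (rule tp(3)[where k=4]) (use k4 N in auto)
      have iT8: "integrable (tilted_measure f \<beta>) (\<lambda>x. x ^ 8)" by (rule tp(3)[where k=8]) (use k8 N in auto)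
      have iG4: "integrable (density lborel (normal_density 0 (1 / sqrt (\<beta> * \<bar>H\<bar>)))) (\<lambda>x. x ^ 4)"
        using gauss_mom(2)[OF sp, of 2] by simp
      have iG8: "integrable (density lborel (normal_density 0 (1 / sqrt (\<beta> * \<bar>H\<bar>)))) (\<lambda>x. x ^ 8)"
        using gauss_mom(2)[OF sp, of 4] by simp
      have "measure (joint_measure f H \<beta> d)
            {\<omega> \<in> space (joint_measure f H \<beta> d).
               \<bar>\<Sum>i<d. \<beta> * (deriv ^^ 4) h 0 / 24 * ((snd \<omega> i)^4 - (fst \<omega> i)^4)\<bar> > \<epsilon>}
            \<le> 3 * (\<beta> * (deriv ^^ 4) h 0 / 24)\<^sup>2 * (real d * g8 \<beta> + real d * m8 \<beta>
               + (real d * (g4 \<beta> - m4 \<beta>))\<^sup>2) / \<epsilon>\<^sup>2"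
        unfolding joint_measure_def g4_def g8_def m4_def m8_def
        by (rule markov_joint[OF PT prob_space_normal_density sT gauss_mom(1)[OF sp] iT4 iT8 iG4 iG8 eps]) (use sp in simp)
      also have "\<dots> = Rf \<beta>"
        using l_pos by (simp add: Rf_def D4_def \<beta>_def)
      finally show ?case by (simp add: \<beta>_def)
    qed
    show "((\<lambda>d. measure (joint_measure f H (l * real d) d)
            {\<omega> \<in> space (joint_measure f H (l * real d) d).
               \<bar>\<Sum>i<d. (l * real d) * (deriv ^^ 4) h 0 / 24 * ((snd \<omega> i)^4 - (fst \<omega> i)^4)\<bar> > \<epsilon>})
          \<longlongrightarrow> 0) sequentially"
      by (rule tendsto_sandwich[OF _ bound tendsto_const Rseq]) (simp add: measure_nonneg)
  qed
qed


end
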